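(* Let $A=[a_{ij}],B=[b_{ij}]\in\mathbb{R}_+^{m\times n}$ be a WN-pair such that $a_{ij}>0$ whenever $b_{ij}=0$. Then the pair $(A,B)$ is $S$-irreducible.
   Context: $[m]=\{1,\dots,m\}$. For $F\in\mathbb{R}^{m\times n}$, $R\subseteq[m]$, $K\subseteq[n]$, $F[R,K]$ is the submatrix with rows in $R$ and columns in $K$. A pair $A,B\in\mathbb{R}_+^{m\times n}$ is a WN-pair if $n\ge m$, $B$ has no zero row, and each column of $B$ has exactly one positive entry. A square nonnegative matrix is monomial if each row and each column has exactly one positive entry; it is irreducible if the digraph with an edge $i\to j$ iff the $(i,j)$ entry is positive is strongly connected. A WN-pair is $S$-irreducible if for every $K\subseteq[n]$ with $|K|=m$ such that $B[[m],K]$ is monomial, the matrix $B[[m],K]^{-1}A[[m],K]$ is irreducible. *)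

theory Defs
  imports Complex_Main
begin

text \<open>Matrices are functions nat \<Rightarrow> nat \<Rightarrow> real; an m\<times>n matrix uses
  row indices {1..m} and column indices {1..n}. Submatrices are kept with their
  original row/column index sets (R and K).\<close>

definition nonneg_mat :: "nat \<Rightarrow> nat \<Rightarrow> (nat \<Rightarrow> nat \<Rightarrow> real) \<Rightarrow> bool" where
  "nonneg_mat m n A \<longleftrightarrow> (\<forall>i\<in>{1..m}. \<forall>j\<in>{1..n}. 0 \<le> A i j)"

definition WN_pair :: "nat \<Rightarrow> nat \<Rightarrow> (nat \<Rightarrow> nat \<Rightarrow> real) \<Rightarrow> (nat \<Rightarrow> nat \<Rightarrow> real) \<Rightarrow> bool" where
  "WN_pair m n A B \<longleftrightarrow>
     nonneg_mat m n A \<and> nonneg_mat m n B \<and> m \<le> n \<and>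
     (\<forall>i\<in>{1..m}. \<exists>j\<in>{1..n}. B i j \<noteq> 0) \<and>
     (\<forall>j\<in>{1..n}. \<exists>!i. i \<in> {1..m} \<and> 0 < B i j)"

definition monomial_on :: "nat set \<Rightarrow> nat set \<Rightarrow> (nat \<Rightarrow> nat \<Rightarrow> real) \<Rightarrow> bool" where
  "monomial_on R K M \<longleftrightarrow>
     (\<forall>i\<in>R. \<exists>!j. j \<in> K \<and> 0 < M i j) \<and> (\<forall>j\<in>K. \<exists>!i. i \<in> R \<and> 0 < M i j)"

definition is_inverse_on :: "nat set \<Rightarrow> nat set \<Rightarrow> (nat \<Rightarrow> nat \<Rightarrow> real) \<Rightarrow> (nat \<Rightarrow> nat \<Rightarrow> real) \<Rightarrow> bool" where
  "is_inverse_on R K M C \<longleftrightarrow>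
     (\<forall>k\<in>K. \<forall>l\<in>K. (\<Sum>i\<in>R. C k i * M i l) = (if k = l then 1 else 0)) \<and>
     (\<forall>i\<in>R. \<forall>i'\<in>R. (\<Sum>k\<in>K. M i k * C k i') = (if i = i' then 1 else 0))"

definition irreducible_on :: "nat set \<Rightarrow> (nat \<Rightarrow> nat \<Rightarrow> real) \<Rightarrow> bool" where
  "irreducible_on K M \<longleftrightarrow>
     (\<forall>k\<in>K. \<forall>l\<in>K. (k, l) \<in> {(p, q). p \<in> K \<and> q \<in> K \<and> 0 < M p q}\<^sup>*)"

definition S_irreducible :: "nat \<Rightarrow> nat \<Rightarrow> (nat \<Rightarrow> nat \<Rightarrow> real) \<Rightarrow> (nat \<Rightarrow> nat \<Rightarrow> real) \<Rightarrow> bool" where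
  "S_irreducible m n A B \<longleftrightarrow>
     (\<forall>K. K \<subseteq> {1..n} \<and> card K = m \<and> monomial_on {1..m} K B \<longrightarrow>
        (\<forall>C. is_inverse_on {1..m} K B C \<longrightarrow>
           irreducible_on K (\<lambda>k l. \<Sum>i\<in>{1..m}. C k i * A i l)))"

end

theory Submission
  imports Defs
begin

theorem proposition6p4:
  fixes m n :: nat and A B :: "nat \<Rightarrow> nat \<Rightarrow> real"
  assumes "WN_pair m n A B"
    and "\<forall>i\<in>{1..m}. \<forall>j\<in>{1..n}. B i j = 0 \<longrightarrow> 0 < A i j"
  shows "S_irreducible m n A B"
  unfolding S_irreducible_def
proof (intro allI impI)
  fix K C
  assume HK: "K \<subseteq> {1..n} \<and> card K = m \<and> monomial_on {1..m} K B"
    and HC: "is_inverse_on {1..m} K B C"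
  have nnB: "\<And>i j. i \<in> {1..m} \<Longrightarrow> j \<in> {1..n} \<Longrightarrow> 0 \<le> B i j"
    using assms(1) unfolding WN_pair_def nonneg_mat_def by blast
  have edge: "0 < (\<Sum>i\<in>{1..m}. C k i * A i l)" if k: "k \<in> K" and l: "l \<in> K" and kl: "k \<noteq> l" for k l
  proof -
    from HK k obtain i where i: "i \<in> {1..m}" "0 < B i k"
      unfolding monomial_on_def by blast
    have uniq: "\<exists>!j. j \<in> K \<and> 0 < B i j" using HK i unfolding monomial_on_def by blast
    have z: "B i j = 0" if "j \<in> K" "j \<noteq> k" for j
    proof -
      have "\<not> 0 < B i j" using uniq i(2) k that by blast
      moreover have "0 \<le> B i j" using nnB i(1) that HK by blast
      ultimately show ?thesis by linarith
    qed
    have fin: "finite K" using HK finite_subset by blast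
    have Ck: "C k i' = (if i = i' then 1 else 0) / B i k" if "i' \<in> {1..m}" for i'
    proof -
      have "(\<Sum>j\<in>K. B i j * C j i') = (if i = i' then 1 else 0)"
        using HC i(1) that unfolding is_inverse_on_def by blast
      moreover have "(\<Sum>j\<in>K. B i j * C j i') = B i k * C k i'"
        using fin k by (subst sum.remove[of K k]) (auto simp: z)
      ultimately show ?thesis using i(2) by (simp add: field_simps)
    qed
    have "(\<Sum>i'\<in>{1..m}. C k i' * A i' l) = C k i * A i l"
      using i(1) by (subst sum.remove[of "{1..m}" i]) (auto simp: Ck)
    also have "\<dots> = A i l / B i k" using Ck[OF i(1)] by simp
    also have "\<dots> > 0"
    proof -
      have "B i l = 0" using z l kl by auto
      hence "0 < A i l" using assms(2) i(1) l HK by blast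
      thus ?thesis using i(2) by simp
    qed
    finally show ?thesis .
  qed
  show "irreducible_on K (\<lambda>k l. \<Sum>i\<in>{1..m}. C k i * A i l)"
    unfolding irreducible_on_def
  proof (intro ballI)
    fix k l assume "k \<in> K" "l \<in> K"
    show "(k, l) \<in> {(p, q). p \<in> K \<and> q \<in> K \<and> 0 < (\<Sum>i\<in>{1..m}. C p i * A i q)}\<^sup>*"
    proof (cases "k = l")
      case False
      thus ?thesis using edge \<open>k \<in> K\<close> \<open>l \<in> K\<close> by (intro r_into_rtrancl) auto
    qed simp
  qed
qed

end
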